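(* Let $q\ge 1$, $n\ge1$ and $\theta\ge 1$ be integers, and let $X=(X_1,\dots,X_n)$ be a random vector with values in $[q]^n$. Let $\sigma$ be a uniformly random permutation of $[n]$, independent of $X$. Then $$\mathbb E_{X,\sigma}\left[\sum_{i=\theta}^n \mathrm{TV}\Big(\big(X_{\sigma(i)}\mid \{X_{\sigma(j)}\}_{j\in[i-\theta]}\big),\ \big(X_{\sigma(i)}\mid \{X_{\sigma(j)}\}_{j\in[i-1]}\big)\Big)^2\right]\le \frac{(\theta-1)\log q}{2}.$$
   Context: $\mathrm{TV}$ is total variation distance and $\log$ is the natural logarithm. For a set $J$ of indices, $(X_k\mid\{X_j\}_{j\in J})$ denotes the conditional law of $X_k$ given the values of $(X_j)_{j\in J}$, evaluated at the realized values of $X$ (so it is a random distribution on $[q]$); $[0]=\emptyset$. *)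

theory Defs
  imports "HOL-Probability.Probability"
begin

definition cond_law :: "(nat \<Rightarrow> nat) pmf \<Rightarrow> nat set \<Rightarrow> nat \<Rightarrow> (nat \<Rightarrow> nat) \<Rightarrow> nat \<Rightarrow> real" where
  "cond_law p J k x a =
     measure_pmf.prob p {y. y k = a \<and> (\<forall>j\<in>J. y j = x j)} /
     measure_pmf.prob p {y. \<forall>j\<in>J. y j = x j}"

definition tv_dist :: "nat \<Rightarrow> (nat \<Rightarrow> real) \<Rightarrow> (nat \<Rightarrow> real) \<Rightarrow> real" where
  "tv_dist q P Q = (1/2) * (\<Sum>a\<in>{1..q}. \<bar>P a - Q a\<bar>)"

end

theory Submission
  imports Defs
begin


lemma t1: fixes t p :: real assumes t0: "0 < t" "t < 1"
  shows "DERIV (\<lambda>t. - p * ln t - (1-p) * ln (1-t) - 2*(p-t)^2) t :> (- p * (1/t) - (1-p) * (-1/(1-t)) - 2*(2*(p-t)*(-1)))"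
  using t0 by (auto intro!: derivative_eq_intros)

lemma t2: fixes t p :: real assumes t0: "0 < t" "t < 1"
  shows "- p * (1/t) - (1-p) * (-1/(1-t)) - 2*(2*(p-t)*(-1)) = (p - t) * (4 - 1/(t*(1-t)))"
proof -
  have "t*(1-t) \<noteq> 0" "1 - t \<noteq> 0" "t \<noteq> 0" using t0 by auto
  thus ?thesis by (simp add: field_simps) 
qed

lemma t3: fixes t :: real shows "t*(1-t) \<le> 1/4"
  using zero_le_power2[of "t - 1/2"] by (simp add: power2_eq_square algebra_simps)

lemma t4: fixes t :: real assumes "0 < t" "t < 1" shows "4 - 1/(t*(1-t)) \<le> 0"
proof -
  have pos: "0 < t*(1-t)" using assms by simp
  have "t*(1-t) * 4 \<le> 1" using t3[of t] by simp
  hence "4 \<le> 1/(t*(1-t))" using pos by (simp add: pos_le_divide_eq)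
  thus ?thesis by simp
qed

lemma binary_pinsker_aux:
  fixes p r :: real
  assumes "0 < r" "r \<le> p" "p < 1"
  shows "2*(p-r)^2 \<le> p * ln (p/r) + (1-p) * ln ((1-p)/(1-r))"
proof -
  define f where "f = (\<lambda>t. - p * ln t - (1-p) * ln (1-t) - 2*(p-t)^2)"
  have "f p \<le> f r"
  proof (rule DERIV_nonpos_imp_nonincreasing[OF assms(2)])
    fix t assume t: "r \<le> t" "t \<le> p"
    have t0: "0 < t" "t < 1" using t assms by auto
    have "(p - t) * (4 - 1/(t*(1-t))) \<le> 0"
      using t t4[OF t0] by (simp add: mult_nonneg_nonpos)
    moreover have "DERIV f t :> (p - t) * (4 - 1/(t*(1-t)))"
      using t1[OF t0, of p] unfolding t2[OF t0, of p] f_def .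
    ultimately show "\<exists>y. DERIV f t :> y \<and> y \<le> 0" by blast
  qed
  moreover have "0 < p" "0 < 1 - p" "0 < 1 - r" using assms by auto
  ultimately show ?thesis using assms unfolding f_def
    by (simp add: ln_div algebra_simps)
qed

lemma binary_pinsker_one:
  fixes r :: real
  assumes "0 < r" "r \<le> 1"
  shows "2*(1-r)^2 \<le> ln (1/r)"
proof -
  define f :: "real \<Rightarrow> real" where "f = (\<lambda>t. - 1 * ln t - (1-1) * ln (1-t) - 2*(1-t)^2)"
  have "f 1 \<le> f r"
  proof (rule DERIV_nonpos_imp_nonincreasing[OF assms(2)])
    fix t assume t: "r \<le> t" "t \<le> 1"
    have t0: "0 < t" using t assms by auto
    have D: "DERIV f t :> (- (1/t) - 2*(2*(1-t)*(-1)))"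
      unfolding f_def using t0
      by (auto intro!: derivative_eq_intros)
    have "t*(1-t)*4 \<le> 1" using t3[of t] by simp
    hence "1/t \<ge> 4*(1-t)" using t0 by (simp add: field_simps)
    hence "- (1/t) - 2*(2*(1-t)*(-1)) \<le> 0" by simp
    with D show "\<exists>y. DERIV f t :> y \<and> y \<le> 0" by blast
  qed
  thus ?thesis using assms unfolding f_def by (simp add: ln_div)
qed

lemma binary_pinsker:
  fixes p r :: real
  assumes "0 < r" "r \<le> p" "p \<le> 1" "r < 1"
  shows "2*(p-r)^2 \<le> p * ln (p/r) + (1-p) * ln ((1-p)/(1-r))"
proof (cases "p < 1")
  case True thus ?thesis using binary_pinsker_aux assms by blast
next
  case False hence "p = 1" using assms by simp
  thus ?thesis using binary_pinsker_one[of r] assms by simp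
qed





lemma logsum_term:
  fixes a b sP sQ :: real
  assumes "0 \<le> a" "0 \<le> b" "b = 0 \<longrightarrow> a = 0" "0 < sP" "0 < sQ"
  shows "a - b * (sP / sQ) \<le> a * ln (a / b) - a * ln (sP / sQ)"
proof (cases "a = 0")
  case True thus ?thesis using assms by simp
next
  case False
  hence a: "0 < a" using assms by simp
  hence b: "0 < b" using assms by force
  define x where "x = (b * sP) / (a * sQ)"
  have x: "0 < x" unfolding x_def using a b assms by simp
  have "ln x = ln (sP/sQ) - ln (a/b)"
    unfolding x_def using a b assms by (simp add: ln_div ln_mult)
  moreover have "ln x \<le> x - 1" using ln_le_minus_one x by blast
  ultimately have "a * (ln (sP/sQ) - ln (a/b)) \<le> a * (x - 1)"
    using a by (simp add: mult_left_mono)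
  moreover have "a * x = b * (sP/sQ)" unfolding x_def using a by simp
  ultimately show ?thesis by (simp add: algebra_simps)
qed

lemma logsum:
  fixes P Q :: "'a \<Rightarrow> real"
  assumes "finite A" "\<forall>a\<in>A. 0 \<le> P a" "\<forall>a\<in>A. 0 \<le> Q a" "\<forall>a\<in>A. Q a = 0 \<longrightarrow> P a = 0"
  shows "(\<Sum>a\<in>A. P a) * ln ((\<Sum>a\<in>A. P a)/(\<Sum>a\<in>A. Q a)) \<le> (\<Sum>a\<in>A. P a * ln (P a / Q a))"
proof (cases "(\<Sum>a\<in>A. P a) = 0")
  case True
  hence "\<forall>a\<in>A. P a = 0" using sum_nonneg_eq_0_iff[OF assms(1)] assms(2) by blast
  thus ?thesis using True by simp
next
  case False
  define sP where "sP = (\<Sum>a\<in>A. P a)"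
  define sQ where "sQ = (\<Sum>a\<in>A. Q a)"
  have sP: "0 < sP" using False sum_nonneg[of A P] assms(2) unfolding sP_def by force
  obtain a0 where a0: "a0 \<in> A" "P a0 \<noteq> 0" using False sum.neutral[of A P] by blast
  hence "Q a0 \<noteq> 0" using assms(4) by blast
  hence "0 < Q a0" using a0 assms(3) by force
  moreover have "Q a0 \<le> sQ" unfolding sQ_def using a0 assms(1,3) by (intro member_le_sum) auto
  ultimately have sQ: "0 < sQ" by simp
  have "(\<Sum>a\<in>A. P a - Q a * (sP/sQ)) \<le> (\<Sum>a\<in>A. P a * ln (P a / Q a) - P a * ln (sP/sQ))"
    using logsum_term assms sP sQ by (intro sum_mono) blast
  moreover have "(\<Sum>a\<in>A. P a - Q a * (sP/sQ)) = 0"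
  proof -
    have "(\<Sum>a\<in>A. Q a * (sP/sQ)) = (\<Sum>a\<in>A. Q a) * (sP/sQ)" by (rule sum_distrib_right[symmetric])
    also have "\<dots> = sP" using sQ unfolding sQ_def by simp
    finally show ?thesis by (simp add: sum_subtractf sP_def)
  qed
  moreover have "(\<Sum>a\<in>A. P a * ln (P a / Q a) - P a * ln (sP/sQ)) = (\<Sum>a\<in>A. P a * ln (P a / Q a)) - sP * ln (sP/sQ)"
    by (simp add: sum_subtractf sum_distrib_right[symmetric] sP_def)
  ultimately show ?thesis unfolding sP_def sQ_def by simp
qed

lemma pinsker:
  fixes P Q :: "'a \<Rightarrow> real"
  assumes fin: "finite S" and P0: "\<forall>a\<in>S. 0 \<le> P a" and Q0: "\<forall>a\<in>S. 0 \<le> Q a"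
    and P1: "sum P S = 1" and Q1: "sum Q S = 1" and ac: "\<forall>a\<in>S. Q a = 0 \<longrightarrow> P a = 0"
  shows "((1/2)*(\<Sum>a\<in>S. \<bar>Q a - P a\<bar>))^2 \<le> (1/2) * (\<Sum>a\<in>S. P a * ln (P a / Q a))"
proof -
  define A where "A = {a\<in>S. Q a \<le> P a}"
  define B where "B = S - A"
  have AS: "A \<subseteq> S" and fA: "finite A" and fB: "finite B" using fin unfolding A_def B_def by auto
  define pA where "pA = sum P A"
  define rA where "rA = sum Q A"
  have PB: "sum P B = 1 - pA" unfolding B_def pA_def using P1 sum.subset_diff[OF AS fin, of P] by simp
  have QB: "sum Q B = 1 - rA" unfolding B_def rA_def using Q1 sum.subset_diff[OF AS fin, of Q] by simp
  have "(\<Sum>a\<in>S. \<bar>Q a - P a\<bar>) = (\<Sum>a\<in>A. \<bar>Q a - P a\<bar>) + (\<Sum>a\<in>B. \<bar>Q a - P a\<bar>)"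
    unfolding B_def using sum.subset_diff[OF AS fin] by (simp add: add.commute)
  also have "(\<Sum>a\<in>A. \<bar>Q a - P a\<bar>) = (\<Sum>a\<in>A. P a - Q a)" unfolding A_def by (intro sum.cong) auto
  also have "(\<Sum>a\<in>B. \<bar>Q a - P a\<bar>) = (\<Sum>a\<in>B. Q a - P a)" unfolding A_def B_def by (intro sum.cong) auto
  finally have tv: "(1/2)*(\<Sum>a\<in>S. \<bar>Q a - P a\<bar>) = pA - rA"
    using PB QB by (simp add: sum_subtractf pA_def rA_def)
  have pr: "rA \<le> pA" unfolding pA_def rA_def A_def by (intro sum_mono) auto
  have KL: "(\<Sum>a\<in>S. P a * ln (P a / Q a)) = (\<Sum>a\<in>A. P a * ln (P a / Q a)) + (\<Sum>a\<in>B. P a * ln (P a / Q a))"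
    unfolding B_def using sum.subset_diff[OF AS fin] by (simp add: add.commute)
  have LA: "pA * ln (pA / rA) \<le> (\<Sum>a\<in>A. P a * ln (P a / Q a))"
    unfolding pA_def rA_def using logsum[OF fA] P0 Q0 ac AS by blast
  have LB: "(1-pA) * ln ((1-pA) / (1-rA)) \<le> (\<Sum>a\<in>B. P a * ln (P a / Q a))"
    using logsum[OF fB, of P Q] P0 Q0 ac PB QB unfolding B_def by auto
  have KL0: "0 \<le> (\<Sum>a\<in>S. P a * ln (P a / Q a))"
    using logsum[OF fin, of P Q] P0 Q0 ac P1 Q1 by simp
  have pA1: "pA \<le> 1" using PB sum_nonneg[of B P] P0 unfolding B_def by force
  show ?thesis
  proof (cases "rA = 0 \<or> rA = 1")
    case True
    have "pA = rA"
    proof (cases "rA = 0")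
      case True
      hence "\<forall>a\<in>A. Q a = 0" using sum_nonneg_eq_0_iff[OF fA, of Q] Q0 AS unfolding rA_def by blast
      hence "\<forall>a\<in>A. P a = 0" using ac AS by blast
      thus ?thesis using True unfolding pA_def by simp
    next
      case False thus ?thesis using \<open>rA = 0 \<or> rA = 1\<close> pr pA1 by simp
    qed
    thus ?thesis using tv KL0 by simp
  next
    case False
    have r0: "0 < rA" using False sum_nonneg[of A Q] Q0 AS unfolding rA_def by force
    have r1: "rA < 1" using False pr pA1 by simp
    have "2*(pA-rA)^2 \<le> (\<Sum>a\<in>S. P a * ln (P a / Q a))"
      using binary_pinsker[OF r0 pr pA1 r1] LA LB KL by simp
    thus ?thesis unfolding tv by simp
  qed
qed



definition PJ :: "(nat\<Rightarrow>nat) pmf \<Rightarrow> nat set \<Rightarrow> (nat\<Rightarrow>nat) \<Rightarrow> real" where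
  "PJ p J x = measure_pmf.prob p {y. \<forall>j\<in>J. y j = x j}"

definition hJ :: "(nat\<Rightarrow>nat) pmf \<Rightarrow> nat set \<Rightarrow> real" where
  "hJ p J = - (\<Sum>x\<in>set_pmf p. pmf p x * ln (PJ p J x))"

lemma prob_sum:
  assumes "finite (set_pmf p)"
  shows "measure_pmf.prob p E = (\<Sum>y\<in>set_pmf p. if y \<in> E then pmf p y else 0)"
proof -
  have "measure_pmf.prob p E = measure_pmf.prob p (set_pmf p \<inter> E)"
    by (metis measure_Int_set_pmf Int_commute)
  also have "\<dots> = sum (pmf p) (set_pmf p \<inter> E)"
    using assms by (simp add: measure_measure_pmf_finite)
  also have "\<dots> = (\<Sum>y\<in>set_pmf p. if y \<in> E then pmf p y else 0)"
    using assms by (rule sum.inter_restrict)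
  finally show ?thesis .
qed

lemma PJ_sum:
  assumes "finite (set_pmf p)"
  shows "PJ p J x = (\<Sum>y\<in>set_pmf p. if (\<forall>j\<in>J. y j = x j) then pmf p y else 0)"
  unfolding PJ_def using prob_sum[OF assms] by simp

lemma PJ_pos:
  assumes "finite (set_pmf p)" "x \<in> set_pmf p"
  shows "0 < PJ p J x"
proof -
  have "pmf p x \<le> (\<Sum>y\<in>set_pmf p. if (\<forall>j\<in>J. y j = x j) then pmf p y else 0)"
    using member_le_sum[of x "set_pmf p" "\<lambda>y. if (\<forall>j\<in>J. y j = x j) then pmf p y else 0"] assms
    by simp
  moreover have "0 < pmf p x" using assms(2) by (simp add: pmf_positive)
  ultimately show ?thesis using PJ_sum[OF assms(1)] by simp
qed

lemma PJ_cong: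
  assumes "\<forall>j\<in>J. x j = y j"
  shows "PJ p J x = PJ p J y"
  unfolding PJ_def using assms by simp

lemma cond_law_cong:
  assumes "\<forall>j\<in>J. x j = y j"
  shows "cond_law p J k x a = cond_law p J k y a"
  unfolding cond_law_def using assms by simp

lemma cond_law_PJ: "cond_law p J k x a = measure_pmf.prob p {y. y k = a \<and> (\<forall>j\<in>J. y j = x j)} / PJ p J x"
  unfolding cond_law_def PJ_def by simp

lemma cond_law_self: "cond_law p J k x (x k) = PJ p (insert k J) x / PJ p J x"
proof -
  have "{y. y k = x k \<and> (\<forall>j\<in>J. y j = x j)} = {y. \<forall>j\<in>insert k J. y j = x j}" by auto
  thus ?thesis unfolding cond_law_PJ unfolding PJ_def by simp
qed

lemma tower:
  assumes fin: "finite (set_pmf p)" and G: "\<And>x y. \<forall>j\<in>B. x j = y j \<Longrightarrow> G x = G y"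
  shows "(\<Sum>x\<in>set_pmf p. pmf p x * G x * (measure_pmf.prob p {y. E y \<and> (\<forall>j\<in>B. y j = x j)} / PJ p B x))
       = (\<Sum>x\<in>set_pmf p. if E x then pmf p x * G x else 0)"
proof -
  let ?S = "set_pmf p"
  let ?w = "pmf p"
  have "(\<Sum>x\<in>?S. ?w x * G x * (measure_pmf.prob p {y. E y \<and> (\<forall>j\<in>B. y j = x j)} / PJ p B x))
      = (\<Sum>x\<in>?S. \<Sum>y\<in>?S. ?w x * G x * ((if E y \<and> (\<forall>j\<in>B. y j = x j) then ?w y else 0) / PJ p B x))"
    by (simp add: prob_sum[OF fin] sum_distrib_left sum_divide_distrib)
  also have "\<dots> = (\<Sum>y\<in>?S. \<Sum>x\<in>?S. ?w x * G x * ((if E y \<and> (\<forall>j\<in>B. y j = x j) then ?w y else 0) / PJ p B x))"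
    by (rule sum.swap)
  also have "\<dots> = (\<Sum>y\<in>?S. if E y then ?w y * G y else 0)"
  proof (rule sum.cong[OF refl])
    fix y assume y: "y \<in> ?S"
    have d: "PJ p B y \<noteq> 0" using PJ_pos[OF fin y, of B] by simp
    have "(\<Sum>x\<in>?S. ?w x * G x * ((if E y \<and> (\<forall>j\<in>B. y j = x j) then ?w y else 0) / PJ p B x))
        = (\<Sum>x\<in>?S. (if E y then (G y * ?w y / PJ p B y) * (if (\<forall>j\<in>B. x j = y j) then ?w x else 0) else 0))"
    proof (rule sum.cong[OF refl])
      fix x assume "x \<in> ?S"
      show "?w x * G x * ((if E y \<and> (\<forall>j\<in>B. y j = x j) then ?w y else 0) / PJ p B x)
          = (if E y then (G y * ?w y / PJ p B y) * (if (\<forall>j\<in>B. x j = y j) then ?w x else 0) else 0)"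
      proof (cases "\<forall>j\<in>B. x j = y j")
        case True
        hence "G x = G y" "PJ p B x = PJ p B y" using G PJ_cong by blast+
        moreover have "\<forall>j\<in>B. y j = x j" using True by simp
        ultimately show ?thesis using True by simp
      next
        case False
        hence e1: "(E y \<and> (\<forall>j\<in>B. y j = x j)) = False" by metis
        have e2: "(\<forall>j\<in>B. x j = y j) = False" using False by simp
        show ?thesis by (simp only: e1 e2 if_False) simp
      qed
    qed
    also have "\<dots> = (if E y then (G y * ?w y / PJ p B y) * PJ p B y else 0)"
    proof (cases "E y")
      case True
      show ?thesis unfolding if_P[OF True] sum_distrib_left[symmetric] PJ_sum[OF fin, of B y, symmetric] ..
    qed simp
    also have "\<dots> = (if E y then ?w y * G y else 0)" using d by simp
    finally show "(\<Sum>x\<in>?S. ?w x * G x * ((if E y \<and> (\<forall>j\<in>B. y j = x j) then ?w y else 0) / PJ p B x))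
        = (if E y then ?w y * G y else 0)" .
  qed
  finally show ?thesis .
qed


lemma cond_law_nonneg: "0 \<le> cond_law p J k x a"
  unfolding cond_law_def by simp

lemma cond_law_sum1:
  assumes fin: "finite (set_pmf p)" and x: "x \<in> set_pmf p" and kq: "\<forall>y\<in>set_pmf p. y k \<in> {1..q}"
  shows "(\<Sum>a\<in>{1..q}. cond_law p J k x a) = 1"
proof -
  have "(\<Sum>a\<in>{1..q}. measure_pmf.prob p {y. y k = a \<and> (\<forall>j\<in>J. y j = x j)})
      = (\<Sum>a\<in>{1..q}. \<Sum>y\<in>set_pmf p. if y k = a \<and> (\<forall>j\<in>J. y j = x j) then pmf p y else 0)"
    by (simp add: prob_sum[OF fin])
  also have "\<dots> = (\<Sum>y\<in>set_pmf p. \<Sum>a\<in>{1..q}. if y k = a \<and> (\<forall>j\<in>J. y j = x j) then pmf p y else 0)"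
    by (rule sum.swap)
  also have "\<dots> = (\<Sum>y\<in>set_pmf p. if (\<forall>j\<in>J. y j = x j) then pmf p y else 0)"
  proof (rule sum.cong[OF refl])
    fix y assume y: "y \<in> set_pmf p"
    hence yk: "y k \<in> {1..q}" using kq by blast
    show "(\<Sum>a\<in>{1..q}. if y k = a \<and> (\<forall>j\<in>J. y j = x j) then pmf p y else 0)
        = (if (\<forall>j\<in>J. y j = x j) then pmf p y else 0)"
    proof (cases "\<forall>j\<in>J. y j = x j")
      case True
      hence "(\<Sum>a\<in>{1..q}. if y k = a \<and> (\<forall>j\<in>J. y j = x j) then pmf p y else 0)
           = (\<Sum>a\<in>{1..q}. if y k = a then pmf p y else 0)" by simp
      also have "\<dots> = pmf p y" using yk by (simp only: sum.delta'[OF finite_atLeastAtMost]) simp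
      finally show ?thesis using True by simp
    next
      case False
      hence e: "(\<forall>j\<in>J. y j = x j) = False" by simp
      show ?thesis by (simp only: e if_False simp_thms) simp
    qed
  qed
  also have "\<dots> = PJ p J x" by (simp add: PJ_sum[OF fin])
  finally have s: "(\<Sum>a\<in>{1..q}. measure_pmf.prob p {y. y k = a \<and> (\<forall>j\<in>J. y j = x j)}) = PJ p J x" .
  have "(\<Sum>a\<in>{1..q}. cond_law p J k x a) = (\<Sum>a\<in>{1..q}. measure_pmf.prob p {y. y k = a \<and> (\<forall>j\<in>J. y j = x j)}) / PJ p J x"
    unfolding cond_law_PJ by (simp add: sum_divide_distrib)
  also have "\<dots> = 1" using s PJ_pos[OF fin x, of J] by simp
  finally show ?thesis .
qed

lemma PJ_insert_le:
  assumes fin: "finite (set_pmf p)"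
  shows "PJ p (insert k J) x \<le> PJ p J x"
  unfolding PJ_sum[OF fin] by (intro sum_mono) auto

lemma kl_identity:
  assumes fin: "finite (set_pmf p)" and AB: "A \<subseteq> B" and kq: "\<forall>y\<in>set_pmf p. y k \<in> {1..q}"
  shows "(\<Sum>x\<in>set_pmf p. pmf p x * (\<Sum>a\<in>{1..q}. cond_law p B k x a * ln (cond_law p B k x a / cond_law p A k x a)))
       = hJ p (insert k A) - hJ p A - hJ p (insert k B) + hJ p B"
proof -
  let ?S = "set_pmf p"
  let ?w = "pmf p"
  define L where "L a x = ln (cond_law p B k x a / cond_law p A k x a)" for a x
  have Lc: "L a x = L a y" if "\<forall>j\<in>B. x j = y j" for a x y
    unfolding L_def using that AB cond_law_cong[of B x y] cond_law_cong[of A x y] by (metis subsetD)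
  have "(\<Sum>x\<in>?S. ?w x * (\<Sum>a\<in>{1..q}. cond_law p B k x a * ln (cond_law p B k x a / cond_law p A k x a)))
      = (\<Sum>x\<in>?S. \<Sum>a\<in>{1..q}. ?w x * L a x * (measure_pmf.prob p {y. y k = a \<and> (\<forall>j\<in>B. y j = x j)} / PJ p B x))"
    unfolding L_def by (simp add: sum_distrib_left cond_law_PJ[of p B] mult_ac)
  also have "\<dots> = (\<Sum>a\<in>{1..q}. \<Sum>x\<in>?S. ?w x * L a x * (measure_pmf.prob p {y. y k = a \<and> (\<forall>j\<in>B. y j = x j)} / PJ p B x))"
    by (rule sum.swap)
  also have "\<dots> = (\<Sum>a\<in>{1..q}. \<Sum>x\<in>?S. if x k = a then ?w x * L a x else 0)"
    using tower[OF fin, of B "L _" "\<lambda>y. y k = _"] Lc by simp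
  also have "\<dots> = (\<Sum>x\<in>?S. \<Sum>a\<in>{1..q}. if x k = a then ?w x * L a x else 0)"
    by (rule sum.swap)
  also have "\<dots> = (\<Sum>x\<in>?S. ?w x * L (x k) x)"
    using kq by (intro sum.cong) auto
  also have "\<dots> = (\<Sum>x\<in>?S. ?w x * (ln (PJ p (insert k B) x) - ln (PJ p B x) - ln (PJ p (insert k A) x) + ln (PJ p A x)))"
  proof (rule sum.cong[OF refl])
    fix x assume x: "x \<in> ?S"
    have "0 < PJ p (insert k B) x" "0 < PJ p B x" "0 < PJ p (insert k A) x" "0 < PJ p A x"
      using PJ_pos[OF fin x] by auto
    thus "?w x * L (x k) x = ?w x * (ln (PJ p (insert k B) x) - ln (PJ p B x) - ln (PJ p (insert k A) x) + ln (PJ p A x))"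
      unfolding L_def cond_law_self by (simp add: ln_div ln_mult)
  qed
  also have "\<dots> = hJ p (insert k A) - hJ p A - hJ p (insert k B) + hJ p B"
    unfolding hJ_def by (simp add: algebra_simps sum.distrib sum_subtractf sum_distrib_left)
  finally show ?thesis .
qed

lemma entropy_le:
  fixes c :: "nat \<Rightarrow> real"
  assumes c0: "\<forall>a\<in>{1..q}. 0 \<le> c a" and c1: "(\<Sum>a\<in>{1..q}. c a) = 1" and q: "q \<ge> 1"
  shows "(\<Sum>a\<in>{1..q}. c a * (- ln (c a))) \<le> ln q"
proof -
  have qp: "0 < real q" using q by simp
  have trm: "c a * (- ln (c a)) \<le> 1/q - c a + c a * ln q" if a: "a \<in> {1..q}" for a
  proof (cases "c a = 0")
    case True thus ?thesis using qp by simp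
  next
    case False
    hence cp: "0 < c a" using c0 a by force
    define x where "x = 1 / (q * c a)"
    have xp: "0 < x" unfolding x_def using cp qp by simp
    have lx: "ln x = - ln q - ln (c a)" unfolding x_def using cp qp by (simp add: ln_div ln_mult)
    have "c a * ln x \<le> c a * (x - 1)" using ln_le_minus_one[OF xp] cp by (simp add: mult_left_mono)
    moreover have "c a * x = 1 / q" unfolding x_def using cp by simp
    ultimately show ?thesis using lx by (simp add: algebra_simps)
  qed
  have "(\<Sum>a\<in>{1..q}. c a * (- ln (c a))) \<le> (\<Sum>a\<in>{1..q}. 1/q - c a + c a * ln q)"
    using trm by (intro sum_mono) auto
  also have "\<dots> = ln q" using c1 qp by (simp add: sum.distrib sum_subtractf sum_distrib_right[symmetric])
  finally show ?thesis .
qed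

lemma h_diff:
  assumes fin: "finite (set_pmf p)"
  shows "hJ p (insert k J) - hJ p J = (\<Sum>x\<in>set_pmf p. pmf p x * (- ln (cond_law p J k x (x k))))"
proof -
  have "hJ p (insert k J) - hJ p J = (\<Sum>x\<in>set_pmf p. pmf p x * (- (ln (PJ p (insert k J) x) - ln (PJ p J x))))"
    unfolding hJ_def by (simp add: algebra_simps sum_subtractf)
  also have "\<dots> = (\<Sum>x\<in>set_pmf p. pmf p x * (- ln (cond_law p J k x (x k))))"
  proof (rule sum.cong[OF refl])
    fix x assume x: "x \<in> set_pmf p"
    have "0 < PJ p (insert k J) x" "0 < PJ p J x" using PJ_pos[OF fin x] by auto
    thus "pmf p x * (- (ln (PJ p (insert k J) x) - ln (PJ p J x))) = pmf p x * (- ln (cond_law p J k x (x k)))"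
      unfolding cond_law_self by (simp add: ln_div)
  qed
  finally show ?thesis .
qed

lemma h_bounds:
  assumes fin: "finite (set_pmf p)" and kq: "\<forall>y\<in>set_pmf p. y k \<in> {1..q}" and q: "q \<ge> 1"
  shows "0 \<le> hJ p (insert k J) - hJ p J" "hJ p (insert k J) - hJ p J \<le> ln q"
proof -
  let ?S = "set_pmf p"
  let ?w = "pmf p"
  define c where "c x a = cond_law p J k x a" for x a
  show "0 \<le> hJ p (insert k J) - hJ p J"
    unfolding h_diff[OF fin]
  proof (intro sum_nonneg)
    fix x assume x: "x \<in> ?S"
    have "0 < PJ p (insert k J) x" "0 < PJ p J x" using PJ_pos[OF fin x] by auto
    moreover have "PJ p (insert k J) x \<le> PJ p J x" by (rule PJ_insert_le[OF fin])
    ultimately have "0 < cond_law p J k x (x k)" "cond_law p J k x (x k) \<le> 1"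
      unfolding cond_law_self by auto
    hence "ln (cond_law p J k x (x k)) \<le> 0" by simp
    thus "0 \<le> ?w x * (- ln (cond_law p J k x (x k)))" using pmf_nonneg[of p x] by (simp add: mult_nonneg_nonpos)
  qed
  have Gc: "- ln (c x a) = - ln (c y a)" if "\<forall>j\<in>J. x j = y j" for a x y
    unfolding c_def using cond_law_cong[OF that] by simp
  have "(\<Sum>x\<in>?S. ?w x * (- ln (c x (x k)))) = (\<Sum>x\<in>?S. \<Sum>a\<in>{1..q}. if x k = a then ?w x * (- ln (c x a)) else 0)"
    using kq by (intro sum.cong) auto
  also have "\<dots> = (\<Sum>a\<in>{1..q}. \<Sum>x\<in>?S. if x k = a then ?w x * (- ln (c x a)) else 0)"
    by (rule sum.swap)
  also have "\<dots> = (\<Sum>a\<in>{1..q}. \<Sum>x\<in>?S. ?w x * (- ln (c x a)) * (measure_pmf.prob p {y. y k = a \<and> (\<forall>j\<in>J. y j = x j)} / PJ p J x))"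
    using tower[OF fin, of J "\<lambda>x. - ln (c x _)" "\<lambda>y. y k = _"] Gc by simp
  also have "\<dots> = (\<Sum>x\<in>?S. ?w x * (\<Sum>a\<in>{1..q}. c x a * (- ln (c x a))))"
    by (subst sum.swap) (simp add: sum_distrib_left c_def cond_law_PJ[of p J] mult_ac)
  also have "\<dots> \<le> (\<Sum>x\<in>?S. ?w x * ln q)"
  proof (intro sum_mono mult_left_mono)
    fix x assume x: "x \<in> ?S"
    show "(\<Sum>a\<in>{1..q}. c x a * (- ln (c x a))) \<le> ln q"
      using entropy_le[of q "c x"] cond_law_nonneg cond_law_sum1[OF fin x kq] q unfolding c_def by blast
  qed simp
  also have "\<dots> = ln q" using sum_pmf_eq_1[OF fin, of p] by (simp add: sum_distrib_right[symmetric])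
  finally show "hJ p (insert k J) - hJ p J \<le> ln q" unfolding h_diff[OF fin] c_def .
qed




lemma tv_bound:
  assumes fin: "finite (set_pmf p)" and AB: "A \<subseteq> B" and kq: "\<forall>y\<in>set_pmf p. y k \<in> {1..q}"
  shows "(\<Sum>x\<in>set_pmf p. pmf p x * (tv_dist q (cond_law p A k x) (cond_law p B k x))^2)
       \<le> (1/2) * (hJ p (insert k A) - hJ p A - hJ p (insert k B) + hJ p B)"
proof -
  have "(\<Sum>x\<in>set_pmf p. pmf p x * (tv_dist q (cond_law p A k x) (cond_law p B k x))^2)
      \<le> (\<Sum>x\<in>set_pmf p. pmf p x * ((1/2) * (\<Sum>a\<in>{1..q}. cond_law p B k x a * ln (cond_law p B k x a / cond_law p A k x a))))"
  proof (intro sum_mono mult_left_mono)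
    fix x assume x: "x \<in> set_pmf p"
    have ac: "\<forall>a\<in>{1..q}. cond_law p A k x a = 0 \<longrightarrow> cond_law p B k x a = 0"
    proof (intro ballI impI)
      fix a assume "cond_law p A k x a = 0"
      hence z: "measure_pmf.prob p {y. y k = a \<and> (\<forall>j\<in>A. y j = x j)} = 0"
        using PJ_pos[OF fin x, of A] unfolding cond_law_PJ by simp
      have "measure_pmf.prob p {y. y k = a \<and> (\<forall>j\<in>B. y j = x j)} \<le> measure_pmf.prob p {y. y k = a \<and> (\<forall>j\<in>A. y j = x j)}"
        using AB by (intro measure_pmf.finite_measure_mono) auto
      hence "measure_pmf.prob p {y. y k = a \<and> (\<forall>j\<in>B. y j = x j)} = 0" using z by (simp add: measure_nonneg antisym)
      thus "cond_law p B k x a = 0" unfolding cond_law_PJ by simp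
    qed
    show "(tv_dist q (cond_law p A k x) (cond_law p B k x))^2
        \<le> (1/2) * (\<Sum>a\<in>{1..q}. cond_law p B k x a * ln (cond_law p B k x a / cond_law p A k x a))"
      unfolding tv_dist_def
      using pinsker[of "{1..q}" "cond_law p B k x" "cond_law p A k x"] ac cond_law_nonneg
        cond_law_sum1[OF fin x kq] by blast
  qed simp
  also have "\<dots> = (1/2) * (\<Sum>x\<in>set_pmf p. pmf p x * (\<Sum>a\<in>{1..q}. cond_law p B k x a * ln (cond_law p B k x a / cond_law p A k x a)))"
    by (simp add: sum_distrib_left mult_ac)
  also have "\<dots> = (1/2) * (hJ p (insert k A) - hJ p A - hJ p (insert k B) + hJ p B)"
    using kl_identity[OF fin AB kq] by simp
  finally show ?thesis .
qed

lemma transpose_image_ivl: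
  assumes "a < i"
  shows "Transposition.transpose (Suc a) i ` {1..Suc a} = {1..a} \<union> {i}"
proof -
  have "{1..Suc a} = insert (Suc a) {1..a}" by auto
  hence "Transposition.transpose (Suc a) i ` {1..Suc a} = insert i (Transposition.transpose (Suc a) i ` {1..a})"
    by simp
  also have "Transposition.transpose (Suc a) i ` {1..a} = {1..a}"
  proof -
    have "Transposition.transpose (Suc a) i ` {1..a} = id ` {1..a}"
      using assms by (intro image_cong) auto
    thus ?thesis by simp
  qed
  finally show ?thesis by auto
qed

lemma perm_sym:
  fixes f :: "nat set \<Rightarrow> real"
  assumes "a < i" "i \<le> n"
  shows "(\<Sum>\<sigma>\<in>{\<sigma>. \<sigma> permutes {1..n}}. f (\<sigma> ` ({1..a} \<union> {i}))) = (\<Sum>\<sigma>\<in>{\<sigma>. \<sigma> permutes {1..n}}. f (\<sigma> ` {1..Suc a}))"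
proof -
  let ?t = "Transposition.transpose (Suc a) i"
  have tp: "?t permutes {1..n}" using assms by (intro permutes_swap_id) auto
  show ?thesis
  proof (rule sum.reindex_bij_witness[where i = "\<lambda>\<sigma>. \<sigma> \<circ> ?t" and j = "\<lambda>\<sigma>. \<sigma> \<circ> ?t"])
    fix \<sigma> assume "\<sigma> \<in> {\<sigma>. \<sigma> permutes {1..n}}"
    show "\<sigma> \<circ> ?t \<circ> ?t = \<sigma>" by (simp add: comp_assoc)
    show "\<sigma> \<circ> ?t \<in> {\<sigma>. \<sigma> permutes {1..n}}" using tp \<open>\<sigma> \<in> _\<close> by (simp add: permutes_compose)
    have e: "(\<sigma> \<circ> ?t) ` {1..Suc a} = \<sigma> ` ({1..a} \<union> {i})"
      by (simp only: image_comp[symmetric] transpose_image_ivl[OF assms(1)])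
    show "f ((\<sigma> \<circ> ?t) ` {1..Suc a}) = f (\<sigma> ` ({1..a} \<union> {i}))" unfolding e ..
  next
    fix \<sigma> assume "\<sigma> \<in> {\<sigma>. \<sigma> permutes {1..n}}"
    show "\<sigma> \<circ> ?t \<circ> ?t = \<sigma>" by (simp add: comp_assoc)
    show "\<sigma> \<circ> ?t \<in> {\<sigma>. \<sigma> permutes {1..n}}" using tp \<open>\<sigma> \<in> _\<close> by (simp add: permutes_compose)
  qed
qed

lemma telescope:
  fixes D :: "nat \<Rightarrow> real"
  assumes th: "1 \<le> \<theta>" and n: "1 \<le> n" and D: "\<forall>m\<in>{1..n}. 0 \<le> D m \<and> D m \<le> L"
  shows "(\<Sum>i\<in>{\<theta>..n}. D (i+1-\<theta>) - D i) \<le> (real \<theta> - 1) * L"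
proof (cases "\<theta> \<le> n")
  case False
  have "0 \<le> L" using D n by force
  thus ?thesis using False th by simp
next
  case True
  have L0: "0 \<le> L" using D n by force
  have "(\<Sum>i\<in>{\<theta>..n}. D (i+1-\<theta>)) = (\<Sum>i\<in>{1+(\<theta>-1)..(n+1-\<theta>)+(\<theta>-1)}. D (i+1-\<theta>))"
    using True th by (intro sum.cong) auto
  also have "\<dots> = (\<Sum>j\<in>{1..n+1-\<theta>}. D (j + (\<theta>-1) + 1 - \<theta>))" by (rule sum.shift_bounds_cl_nat_ivl)
  also have "\<dots> = (\<Sum>j\<in>{1..n+1-\<theta>}. D j)" using th by (intro sum.cong) auto
  finally have s1: "(\<Sum>i\<in>{\<theta>..n}. D (i+1-\<theta>)) = (\<Sum>j\<in>{1..n+1-\<theta>}. D j)" .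
  have u1: "{1..n} = {1..n+1-\<theta>} \<union> {n+2-\<theta>..n}" using True th by auto
  have u2: "{1..n} = {1..\<theta>-1} \<union> {\<theta>..n}" using True th by auto
  have "(\<Sum>m\<in>{1..n}. D m) = (\<Sum>j\<in>{1..n+1-\<theta>}. D j) + (\<Sum>m\<in>{n+2-\<theta>..n}. D m)"
    unfolding u1 by (rule sum.union_disjoint) auto
  moreover have "(\<Sum>m\<in>{1..n}. D m) = (\<Sum>m\<in>{1..\<theta>-1}. D m) + (\<Sum>m\<in>{\<theta>..n}. D m)"
    unfolding u2 by (rule sum.union_disjoint) auto
  ultimately have "(\<Sum>i\<in>{\<theta>..n}. D (i+1-\<theta>) - D i) = (\<Sum>m\<in>{1..\<theta>-1}. D m) - (\<Sum>m\<in>{n+2-\<theta>..n}. D m)"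
    using s1 by (simp add: sum_subtractf)
  also have "\<dots> \<le> (\<Sum>m\<in>{1..\<theta>-1}. D m)"
  proof -
    have "0 \<le> (\<Sum>m\<in>{n+2-\<theta>..n}. D m)" using D True by (intro sum_nonneg) auto
    thus ?thesis by simp
  qed
  also have "\<dots> \<le> of_nat (card {1..\<theta>-1}) * L"
    using D True by (intro sum_bounded_above) auto
  also have "\<dots> = (real \<theta> - 1) * L" using th by (simp add: of_nat_diff)
  finally show ?thesis .
qed


lemma main_fin:
  fixes q n \<theta> :: nat and p :: "(nat \<Rightarrow> nat) pmf"
  assumes q: "q \<ge> 1" and n: "n \<ge> 1" and th: "\<theta> \<ge> 1" and fin: "finite (set_pmf p)"
    and supp: "\<forall>x\<in>set_pmf p. \<forall>i\<in>{1..n}. x i \<in> {1..q}"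
  shows "measure_pmf.expectation (pair_pmf p (pmf_of_set {\<sigma>. \<sigma> permutes {1..n}}))
           (\<lambda>(x, \<sigma>). \<Sum>i\<in>{\<theta>..n}.
              (tv_dist q (cond_law p (\<sigma> ` {1..i - \<theta>}) (\<sigma> i) x)
                         (cond_law p (\<sigma> ` {1..i - 1}) (\<sigma> i) x)) ^ 2)
         \<le> (real \<theta> - 1) * ln (real q) / 2"
proof -
  define Perm where "Perm = {\<sigma>. \<sigma> permutes {1..n}}"
  have finP: "finite Perm" unfolding Perm_def by (simp add: finite_permutations)
  have neP: "Perm \<noteq> {}" unfolding Perm_def using permutes_id by blast
  define M where "M = card Perm"
  have M0: "0 < M" unfolding M_def using finP neP by (simp add: card_gt_0_iff)
  define T where "T x \<sigma> = (\<Sum>i\<in>{\<theta>..n}. (tv_dist q (cond_law p (\<sigma> ` {1..i - \<theta>}) (\<sigma> i) x)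
                         (cond_law p (\<sigma> ` {1..i - 1}) (\<sigma> i) x)) ^ 2)" for x \<sigma>
  define h where "h J = hJ p J" for J
  define F where "F m = (\<Sum>\<sigma>\<in>Perm. h (\<sigma> ` {1..m}))" for m
  define D where "D m = F m - F (m - 1)" for m
  have kq: "\<forall>y\<in>set_pmf p. y (\<sigma> i) \<in> {1..q}" if "\<sigma> \<in> Perm" "i \<in> {1..n}" for \<sigma> i
  proof -
    have "\<sigma> i \<in> {1..n}" using that unfolding Perm_def by (metis mem_Collect_eq permutes_in_image)
    thus ?thesis using supp by blast
  qed
  have "measure_pmf.expectation (pair_pmf p (pmf_of_set Perm)) (\<lambda>(x, \<sigma>). T x \<sigma>)
      = (\<Sum>z\<in>set_pmf p \<times> Perm. (case z of (x, \<sigma>) \<Rightarrow> T x \<sigma>) * pmf (pair_pmf p (pmf_of_set Perm)) z)"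
    by (rule integral_measure_pmf_real) (use finP neP fin in auto)
  also have "\<dots> = (\<Sum>x\<in>set_pmf p. \<Sum>\<sigma>\<in>Perm. T x \<sigma> * pmf (pair_pmf p (pmf_of_set Perm)) (x, \<sigma>))"
    by (simp add: sum.cartesian_product split_beta)
  also have "\<dots> = (\<Sum>x\<in>set_pmf p. \<Sum>\<sigma>\<in>Perm. T x \<sigma> * (pmf p x * (1 / M)))"
    using finP neP by (intro sum.cong refl) (auto simp: pmf_pair M_def)
  also have "\<dots> = (1 / M) * (\<Sum>\<sigma>\<in>Perm. \<Sum>i\<in>{\<theta>..n}. \<Sum>x\<in>set_pmf p. pmf p x *
        (tv_dist q (cond_law p (\<sigma> ` {1..i - \<theta>}) (\<sigma> i) x) (cond_law p (\<sigma> ` {1..i - 1}) (\<sigma> i) x)) ^ 2)"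
    apply (subst sum.swap)
    apply (simp add: T_def sum_distrib_left sum_distrib_right mult_ac)
    apply (intro sum.cong refl)
    apply (subst sum.swap)
    apply simp
    done
  also have "\<dots> \<le> (1 / M) * (\<Sum>\<sigma>\<in>Perm. \<Sum>i\<in>{\<theta>..n}. (1/2) *
        (h (\<sigma> ` ({1..i - \<theta>} \<union> {i})) - h (\<sigma> ` {1..i - \<theta>}) - h (\<sigma> ` {1..i}) + h (\<sigma> ` {1..i - 1})))"
  proof (intro mult_left_mono sum_mono)
    fix \<sigma> i assume \<sigma>: "\<sigma> \<in> Perm" and i: "i \<in> {\<theta>..n}"
    have i1: "i \<in> {1..n}" using i th by auto
    have AB: "\<sigma> ` {1..i - \<theta>} \<subseteq> \<sigma> ` {1..i - 1}" using th by (intro image_mono) auto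
    have e1: "insert (\<sigma> i) (\<sigma> ` {1..i - \<theta>}) = \<sigma> ` ({1..i - \<theta>} \<union> {i})" by auto
    have "{1..i} = insert i {1..i - 1}" using i1 by auto
    hence e2: "insert (\<sigma> i) (\<sigma> ` {1..i - 1}) = \<sigma> ` {1..i}" by simp
    show "(\<Sum>x\<in>set_pmf p. pmf p x *
        (tv_dist q (cond_law p (\<sigma> ` {1..i - \<theta>}) (\<sigma> i) x) (cond_law p (\<sigma> ` {1..i - 1}) (\<sigma> i) x)) ^ 2)
      \<le> (1/2) * (h (\<sigma> ` ({1..i - \<theta>} \<union> {i})) - h (\<sigma> ` {1..i - \<theta>}) - h (\<sigma> ` {1..i}) + h (\<sigma> ` {1..i - 1}))"
      using tv_bound[OF fin AB kq[OF \<sigma> i1]] unfolding e1 e2 h_def .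
  qed simp
  also have "\<dots> = (1 / M) * ((1/2) * (\<Sum>i\<in>{\<theta>..n}. D (i + 1 - \<theta>) - D i))"
  proof -
    have "(\<Sum>\<sigma>\<in>Perm. \<Sum>i\<in>{\<theta>..n}. (1/2) *
        (h (\<sigma> ` ({1..i - \<theta>} \<union> {i})) - h (\<sigma> ` {1..i - \<theta>}) - h (\<sigma> ` {1..i}) + h (\<sigma> ` {1..i - 1})))
      = (1/2) * (\<Sum>i\<in>{\<theta>..n}. (\<Sum>\<sigma>\<in>Perm. h (\<sigma> ` ({1..i - \<theta>} \<union> {i}))) - F (i - \<theta>) - F i + F (i - 1))"
    proof -
      have "(\<Sum>\<sigma>\<in>Perm. \<Sum>i\<in>{\<theta>..n}. (1/2) *
        (h (\<sigma> ` ({1..i - \<theta>} \<union> {i})) - h (\<sigma> ` {1..i - \<theta>}) - h (\<sigma> ` {1..i}) + h (\<sigma> ` {1..i - 1})))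
        = (\<Sum>i\<in>{\<theta>..n}. \<Sum>\<sigma>\<in>Perm. (1/2) *
        (h (\<sigma> ` ({1..i - \<theta>} \<union> {i})) - h (\<sigma> ` {1..i - \<theta>}) - h (\<sigma> ` {1..i}) + h (\<sigma> ` {1..i - 1})))"
        by (rule sum.swap)
      also have "\<dots> = (1/2) * (\<Sum>i\<in>{\<theta>..n}. \<Sum>\<sigma>\<in>Perm.
        (h (\<sigma> ` ({1..i - \<theta>} \<union> {i})) - h (\<sigma> ` {1..i - \<theta>}) - h (\<sigma> ` {1..i}) + h (\<sigma> ` {1..i - 1})))"
        by (simp only: sum_distrib_left)
      also have "\<dots> = (1/2) * (\<Sum>i\<in>{\<theta>..n}. (\<Sum>\<sigma>\<in>Perm. h (\<sigma> ` ({1..i - \<theta>} \<union> {i}))) - F (i - \<theta>) - F i + F (i - 1))"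
        unfolding F_def by (simp only: sum.distrib sum_subtractf)
      finally show ?thesis .
    qed
    also have "\<dots> = (1/2) * (\<Sum>i\<in>{\<theta>..n}. D (i + 1 - \<theta>) - D i)"
    proof -
      have "(\<Sum>\<sigma>\<in>Perm. h (\<sigma> ` ({1..i - \<theta>} \<union> {i}))) - F (i - \<theta>) - F i + F (i - 1) = D (i + 1 - \<theta>) - D i"
        if i: "i \<in> {\<theta>..n}" for i
      proof -
        have "(\<Sum>\<sigma>\<in>Perm. h (\<sigma> ` ({1..i - \<theta>} \<union> {i}))) = F (Suc (i - \<theta>))"
          unfolding F_def Perm_def using i th by (intro perm_sym) auto
        moreover have "Suc (i - \<theta>) = i + 1 - \<theta>" "i + 1 - \<theta> - 1 = i - \<theta>" using i by auto
        ultimately show ?thesis unfolding D_def by simp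
      qed
      thus ?thesis by (intro arg_cong[where f="\<lambda>x. (1/2) * x"] sum.cong refl) blast
    qed
    finally show ?thesis by (rule arg_cong[where f="\<lambda>x. (1 / M) * x"])
  qed
  also have "\<dots> \<le> (1 / M) * ((1/2) * ((real \<theta> - 1) * (M * ln q)))"
  proof -
    have "\<forall>m\<in>{1..n}. 0 \<le> D m \<and> D m \<le> M * ln q"
    proof
      fix m assume m: "m \<in> {1..n}"
      have e: "\<sigma> ` {1..m} = insert (\<sigma> m) (\<sigma> ` {1..m - 1})" for \<sigma> :: "nat \<Rightarrow> nat"
      proof -
        have "{1..m} = insert m {1..m - 1}" using m by auto
        thus ?thesis by simp
      qed
      have Dm: "D m = (\<Sum>\<sigma>\<in>Perm. h (insert (\<sigma> m) (\<sigma> ` {1..m - 1})) - h (\<sigma> ` {1..m - 1}))"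
        unfolding D_def F_def e by (simp add: sum_subtractf)
      have "0 \<le> D m" unfolding Dm h_def
        using h_bounds(1)[OF fin kq q] m by (intro sum_nonneg) blast
      moreover have "D m \<le> of_nat (card Perm) * ln q" unfolding Dm h_def
        using h_bounds(2)[OF fin kq q] m by (intro sum_bounded_above) blast
      ultimately show "0 \<le> D m \<and> D m \<le> M * ln q" unfolding M_def by simp
    qed
    hence "(\<Sum>i\<in>{\<theta>..n}. D (i + 1 - \<theta>) - D i) \<le> (real \<theta> - 1) * (M * ln q)"
      by (rule telescope[OF th n])
    thus ?thesis using M0 by (intro mult_left_mono) auto
  qed
  also have "\<dots> = (real \<theta> - 1) * ln (real q) / 2" using M0 by simp
  finally show ?thesis unfolding T_def Perm_def .
qed





theorem lemma2p5:
  fixes q n \<theta> :: nat and p :: "(nat \<Rightarrow> nat) pmf"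
  assumes "q \<ge> 1" and "n \<ge> 1" and "\<theta> \<ge> 1"
    and "\<forall>x\<in>set_pmf p. \<forall>i\<in>{1..n}. x i \<in> {1..q}"
  shows "measure_pmf.expectation (pair_pmf p (pmf_of_set {\<sigma>. \<sigma> permutes {1..n}}))
           (\<lambda>(x, \<sigma>). \<Sum>i\<in>{\<theta>..n}.
              (tv_dist q (cond_law p (\<sigma> ` {1..i - \<theta>}) (\<sigma> i) x)
                         (cond_law p (\<sigma> ` {1..i - 1}) (\<sigma> i) x)) ^ 2)
         \<le> (real \<theta> - 1) * ln (real q) / 2"
proof -
  define r where "r y = restrict y {1..n}" for y :: "nat \<Rightarrow> nat"
  define p' where "p' = map_pmf r p"
  define Perm where "Perm = {\<sigma>. \<sigma> permutes {1..n}}"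
  have finP: "finite Perm" unfolding Perm_def by (simp add: finite_permutations)
  have neP: "Perm \<noteq> {}" unfolding Perm_def using permutes_id by blast
  have sp': "set_pmf p' = r ` set_pmf p" unfolding p'_def by simp
  have supp': "\<forall>x\<in>set_pmf p'. \<forall>i\<in>{1..n}. x i \<in> {1..q}"
    using assms(4) unfolding sp' r_def by auto
  have fin': "finite (set_pmf p')"
  proof (rule finite_subset)
    show "set_pmf p' \<subseteq> PiE {1..n} (\<lambda>_. {1..q})"
      using assms(4) unfolding sp' r_def by (auto simp: restrict_PiE_iff)
    show "finite (PiE {1..n} (\<lambda>_. {1..q::nat}))" by (intro finite_PiE) auto
  qed
  have cl: "cond_law p J k x a = cond_law p' J k (r x) a" if "J \<subseteq> {1..n}" "k \<in> {1..n}" for J k x a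
  proof -
    have "r -` {y. y k = a \<and> (\<forall>j\<in>J. y j = r x j)} = {y. y k = a \<and> (\<forall>j\<in>J. y j = x j)}"
      using that unfolding r_def by auto
    moreover have "r -` {y. \<forall>j\<in>J. y j = r x j} = {y. \<forall>j\<in>J. y j = x j}"
      using that unfolding r_def by auto
    ultimately show ?thesis unfolding cond_law_def p'_def by simp
  qed
  define G where "G = (\<lambda>(x, \<sigma>). \<Sum>i\<in>{\<theta>..n}.
              (tv_dist q (cond_law p' (\<sigma> ` {1..i - \<theta>}) (\<sigma> i) x)
                         (cond_law p' (\<sigma> ` {1..i - 1}) (\<sigma> i) x)) ^ 2)"
  have "measure_pmf.expectation (pair_pmf p (pmf_of_set Perm))
           (\<lambda>(x, \<sigma>). \<Sum>i\<in>{\<theta>..n}.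
              (tv_dist q (cond_law p (\<sigma> ` {1..i - \<theta>}) (\<sigma> i) x)
                         (cond_law p (\<sigma> ` {1..i - 1}) (\<sigma> i) x)) ^ 2)
      = measure_pmf.expectation (pair_pmf p (pmf_of_set Perm)) (\<lambda>(x, \<sigma>). G (r x, \<sigma>))"
  proof (intro integral_cong_AE)
    show "AE z in measure_pmf (pair_pmf p (pmf_of_set Perm)).
      (case z of (x, \<sigma>) \<Rightarrow> \<Sum>i\<in>{\<theta>..n}.
              (tv_dist q (cond_law p (\<sigma> ` {1..i - \<theta>}) (\<sigma> i) x)
                         (cond_law p (\<sigma> ` {1..i - 1}) (\<sigma> i) x)) ^ 2) = (case z of (x, \<sigma>) \<Rightarrow> G (r x, \<sigma>))"
    proof (subst AE_measure_pmf_iff, intro ballI)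
      fix z assume z: "z \<in> set_pmf (pair_pmf p (pmf_of_set Perm))"
      obtain x \<sigma> where zx: "z = (x, \<sigma>)" by fastforce
      have \<sigma>: "\<sigma> permutes {1..n}" using z finP neP unfolding zx Perm_def by simp
      have "(tv_dist q (cond_law p (\<sigma> ` {1..i - \<theta>}) (\<sigma> i) x) (cond_law p (\<sigma> ` {1..i - 1}) (\<sigma> i) x)) ^ 2
          = (tv_dist q (cond_law p' (\<sigma> ` {1..i - \<theta>}) (\<sigma> i) (r x)) (cond_law p' (\<sigma> ` {1..i - 1}) (\<sigma> i) (r x))) ^ 2"
        if i: "i \<in> {\<theta>..n}" for i
      proof -
        have s0: "{1..i - \<theta>} \<subseteq> {1..n}" "{1..i - 1} \<subseteq> {1..n}" using i by auto
        have s1: "\<sigma> ` {1..i - \<theta>} \<subseteq> {1..n}" "\<sigma> ` {1..i - 1} \<subseteq> {1..n}"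
          using image_mono[OF s0(1), of \<sigma>] image_mono[OF s0(2), of \<sigma>] permutes_image[OF \<sigma>] by simp_all
        have s2: "\<sigma> i \<in> {1..n}" using i assms(3) permutes_in_image[OF \<sigma>] by auto
        show ?thesis using cl[OF s1(1) s2] cl[OF s1(2) s2] by presburger
      qed
      thus "(case z of (x, \<sigma>) \<Rightarrow> \<Sum>i\<in>{\<theta>..n}.
              (tv_dist q (cond_law p (\<sigma> ` {1..i - \<theta>}) (\<sigma> i) x)
                         (cond_law p (\<sigma> ` {1..i - 1}) (\<sigma> i) x)) ^ 2) = (case z of (x, \<sigma>) \<Rightarrow> G (r x, \<sigma>))"
        unfolding zx G_def prod.case by (intro sum.cong refl) blast
    qed
  qed simp_all
  also have "\<dots> = measure_pmf.expectation (map_pmf (\<lambda>(x, \<sigma>). (r x, id \<sigma>)) (pair_pmf p (pmf_of_set Perm))) G"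
    by (simp add: case_prod_unfold)
  also have "\<dots> = measure_pmf.expectation (pair_pmf p' (pmf_of_set Perm)) G"
    unfolding map_pair p'_def by simp
  also have "\<dots> \<le> (real \<theta> - 1) * ln (real q) / 2"
    unfolding G_def Perm_def by (rule main_fin[OF assms(1,2,3) fin' supp'])
  finally show ?thesis unfolding Perm_def .
qed


end
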